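(* Let $M$ be a finite group whose order is divisible by the prime $p$. Let $y,z\in M$ and write $y=y_sy_u$, $z=z_sz_u$ as products of their commuting $p$-regular and $p$-parts. If $y_sz_u\neq z_uy_s$ and $z_sy_u\neq y_uz_s$, then $yz\neq zy$, $|\mathcal O_y^{\langle y,z\rangle}|\geq3$ and $|\mathcal O_z^{\langle y,z\rangle}|\geq3$. If in addition $y$ and $z$ are conjugate in $M$ and $\mathcal O_y^{\langle y,z\rangle}\cap\mathcal O_z^{\langle y,z\rangle}=\emptyset$, then the conjugacy class $\mathcal O_y^M$ is of type C.
   Context: $\mathcal O^H_x$ denotes the conjugacy class of $x$ in $H$. A conjugacy class $\mathcal O$ in a finite group $M$ is of type C if there exist $H\leq M$ and $r,s\in\mathcal O\cap H$ with: $rs\neq sr$; $\mathcal O_r^H\neq\mathcal O_s^H$; $H=\langle\mathcal O_r^H,\mathcal O_s^H\rangle$; and either $\min(|\mathcal O_r^H|,|\mathcal O_s^H|)>2$ or $\max(|\mathcal O_r^H|,|\mathcal O_s^H|)>4$. *)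

theory Defs
  imports "HOL-Algebra.Algebra"
begin

definition conj_class :: "('a, 'b) monoid_scheme \<Rightarrow> 'a set \<Rightarrow> 'a \<Rightarrow> 'a set" where
  "conj_class G H x = {h \<otimes>\<^bsub>G\<^esub> x \<otimes>\<^bsub>G\<^esub> inv\<^bsub>G\<^esub> h | h. h \<in> H}"

definition type_C :: "('a, 'b) monoid_scheme \<Rightarrow> 'a set \<Rightarrow> bool" where
  "type_C M C \<longleftrightarrow> (\<exists>H r s. subgroup H M \<and> r \<in> C \<inter> H \<and> s \<in> C \<inter> H \<and>
      r \<otimes>\<^bsub>M\<^esub> s \<noteq> s \<otimes>\<^bsub>M\<^esub> r \<and>
      conj_class M H r \<noteq> conj_class M H s \<and>
      H = generate M (conj_class M H r \<union> conj_class M H s) \<and>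
      (min (card (conj_class M H r)) (card (conj_class M H s)) > 2 \<or>
       max (card (conj_class M H r)) (card (conj_class M H s)) > 4))"

definition p_decomp :: "('a, 'b) monoid_scheme \<Rightarrow> nat \<Rightarrow> 'a \<Rightarrow> 'a \<Rightarrow> 'a \<Rightarrow> bool" where
  "p_decomp G p x s u \<longleftrightarrow> s \<in> carrier G \<and> u \<in> carrier G \<and>
     x = s \<otimes>\<^bsub>G\<^esub> u \<and> s \<otimes>\<^bsub>G\<^esub> u = u \<otimes>\<^bsub>G\<^esub> s \<and>
     coprime (group.ord G s) p \<and> (\<exists>k. group.ord G u = p ^ k)"

end

theory Submission
  imports Defs
begin

lemma (in group) comm_part_pow:
  assumes fin: "finite (carrier G)" and s: "s \<in> carrier G" and u: "u \<in> carrier G"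
    and c: "s \<otimes> u = u \<otimes> s" and cp: "coprime (ord s) (ord u)"
  shows "\<exists>n. s = (s \<otimes> u) [^] (n::nat)"
proof -
  have b0: "ord u \<noteq> 0" using ord_ge_1[OF fin u] by simp
  obtain i j where ij: "ord u * i = ord s * j + gcd (ord u) (ord s)"
    using bezout_nat[OF b0, of "ord s"] by blast
  have g: "gcd (ord u) (ord s) = 1" using cp by (simp add: coprime_commute)
  have "(s \<otimes> u) [^] (ord u * i) = s [^] (ord u * i) \<otimes> u [^] (ord u * i)"
    using pow_mult_distrib[OF c s u] by simp
  also have "u [^] (ord u * i) = \<one>"
    using u by (simp add: nat_pow_pow[symmetric])
  also have "s [^] (ord u * i) = s"
  proof -
    have "s [^] (ord u * i) = s [^] (ord s * j) \<otimes> s [^] (1::nat)"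
      using ij g s by (simp add: nat_pow_mult)
    also have "\<dots> = s" using s by (simp add: nat_pow_pow[symmetric])
    finally show ?thesis .
  qed
  finally show ?thesis using s by (metis r_one)
qed

lemma (in group) pdecomp_pows:
  assumes fin: "finite (carrier G)" and d: "p_decomp G p x s u"
  shows "\<exists>n. s = x [^] (n::nat)" "\<exists>n. u = x [^] (n::nat)"
proof -
  from d have s: "s \<in> carrier G" and u: "u \<in> carrier G" and x: "x = s \<otimes> u"
    and c: "s \<otimes> u = u \<otimes> s" and cs: "coprime (ord s) p"
    and k: "\<exists>k. ord u = p ^ k" unfolding p_decomp_def by auto
  have cp: "coprime (ord s) (ord u)" using cs k by auto
  show "\<exists>n. s = x [^] (n::nat)" using comm_part_pow[OF fin s u c cp] x by simp
  show "\<exists>n. u = x [^] (n::nat)" using comm_part_pow[OF fin u s c[symmetric]] cp x c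
    by (simp add: coprime_commute)
qed

lemma (in group) comm_pows:
  assumes "a \<in> carrier G" "b \<in> carrier G" "a \<otimes> b = b \<otimes> a"
  shows "a [^] (n::nat) \<otimes> b [^] (m::nat) = b [^] m \<otimes> a [^] n"
proof -
  have "a [^] n \<otimes> b = b \<otimes> a [^] n" using group_commutes_pow assms by blast
  then have "b [^] m \<otimes> a [^] n = a [^] n \<otimes> b [^] m"
    using group_commutes_pow[of b "a [^] n" m] assms by simp
  then show ?thesis by simp
qed

lemma (in group) conj_fix_iff:
  assumes "a \<in> carrier G" "b \<in> carrier G"
  shows "a \<otimes> b \<otimes> inv a = b \<longleftrightarrow> a \<otimes> b = b \<otimes> a"
proof
  assume h: "a \<otimes> b \<otimes> inv a = b"
  have "a \<otimes> b = a \<otimes> b \<otimes> inv a \<otimes> a" using assms by (simp add: m_assoc)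
  then show "a \<otimes> b = b \<otimes> a" using h by simp
next
  assume h: "a \<otimes> b = b \<otimes> a"
  then show "a \<otimes> b \<otimes> inv a = b" using assms by (simp add: m_assoc)
qed

lemma (in group) odd_root_comm:
  assumes fin: "finite (carrier G)" and w: "w \<in> carrier G" and y: "y \<in> carrier G"
    and od: "odd (ord w)" and c: "(w \<otimes> w) \<otimes> y = y \<otimes> (w \<otimes> w)"
  shows "w \<otimes> y = y \<otimes> w"
proof -
  obtain j where j: "ord w + 1 = 2 * j" using od by (metis odd_even_add even_iff_mod_2_eq_zero odd_one dvdE)
  have "w = w [^] (ord w + 1)" using w by (simp add: nat_pow_mult[symmetric])
  also have "\<dots> = (w [^] (2::nat)) [^] j" using w j by (simp add: nat_pow_pow)
  also have "w [^] (2::nat) = w \<otimes> w" using w by (simp add: numeral_2_eq_2)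
  finally have e: "w = (w \<otimes> w) [^] j" .
  show ?thesis using group_commutes_pow[OF c _ y, of j] w e by simp
qed

lemma (in group) conj_class_card3:
  assumes fin: "finite (carrier G)" and y: "y \<in> carrier G" and z: "z \<in> carrier G"
    and H: "subgroup H G" and yH: "z \<in> H"
    and nc: "z \<otimes> y \<noteq> y \<otimes> z" and n2: "(z \<otimes> z) \<otimes> y \<noteq> y \<otimes> (z \<otimes> z)"
  shows "card (conj_class G H y) \<ge> 3"
proof -
  have one: "\<one> \<in> H" by (rule subgroup.one_closed[OF H])
  have zz: "z \<otimes> z \<in> H" by (rule subgroup.m_closed[OF H yH yH])
  have Hc: "H \<subseteq> carrier G" by (rule subgroup.subset[OF H])
  have sub: "conj_class G H y \<subseteq> carrier G"
  proof
    fix x assume "x \<in> conj_class G H y"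
    then obtain h where h: "h \<in> H" and x: "x = h \<otimes> y \<otimes> inv h" unfolding conj_class_def by blast
    have "h \<in> carrier G" using h Hc by blast
    then show "x \<in> carrier G" using x y by simp
  qed
  have fS: "finite (conj_class G H y)" using finite_subset[OF sub fin] .
  have "\<one> \<otimes> y \<otimes> inv \<one> \<in> conj_class G H y" unfolding conj_class_def using one by blast
  then have e1: "y \<in> conj_class G H y" using y by simp
  have e2: "z \<otimes> y \<otimes> inv z \<in> conj_class G H y" unfolding conj_class_def using yH by blast
  have e3: "(z \<otimes> z) \<otimes> y \<otimes> inv (z \<otimes> z) \<in> conj_class G H y" unfolding conj_class_def using zz by blast
  have d12: "z \<otimes> y \<otimes> inv z \<noteq> y" using conj_fix_iff[OF z y] nc by simp
  have d13: "(z \<otimes> z) \<otimes> y \<otimes> inv (z \<otimes> z) \<noteq> y" using conj_fix_iff[OF _ y, of "z \<otimes> z"] n2 z by simp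
  have d23: "(z \<otimes> z) \<otimes> y \<otimes> inv (z \<otimes> z) \<noteq> z \<otimes> y \<otimes> inv z"
  proof
    assume h: "(z \<otimes> z) \<otimes> y \<otimes> inv (z \<otimes> z) = z \<otimes> y \<otimes> inv z"
    define a where "a = z \<otimes> y \<otimes> inv z"
    have a: "a \<in> carrier G" unfolding a_def using z y by simp
    have "(z \<otimes> z) \<otimes> y \<otimes> inv (z \<otimes> z) = z \<otimes> a \<otimes> inv z"
      unfolding a_def using z y by (simp add: inv_mult_group m_assoc)
    with h have "(z \<otimes> a) \<otimes> inv z = (z \<otimes> y) \<otimes> inv z" unfolding a_def by simp
    then have "z \<otimes> a = z \<otimes> y" using r_cancel[of "inv z" "z \<otimes> a" "z \<otimes> y"] z y a by simp
    then have "a = y" using l_cancel[of z a y] z y a by simp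
    with d12 show False unfolding a_def by simp
  qed
  have "card {y, z \<otimes> y \<otimes> inv z, (z \<otimes> z) \<otimes> y \<otimes> inv (z \<otimes> z)} = 3"
    using d12 d13 d23 by auto
  moreover have "card {y, z \<otimes> y \<otimes> inv z, (z \<otimes> z) \<otimes> y \<otimes> inv (z \<otimes> z)} \<le> card (conj_class G H y)"
    using e1 e2 e3 fS by (intro card_mono) auto
  ultimately show ?thesis by simp
qed


lemma (in group) conj_mem_self:
  assumes H: "subgroup H G" and y: "y \<in> carrier G"
  shows "y \<in> conj_class G H y"
proof -
  have "\<one> \<otimes> y \<otimes> inv \<one> \<in> conj_class G H y"
    unfolding conj_class_def using subgroup.one_closed[OF H] by blast
  then show ?thesis using y by simp
qed

lemma (in group) conj_class_sub:
  assumes K: "subgroup K G" and HK: "H \<subseteq> K" and y: "y \<in> K"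
  shows "conj_class G H y \<subseteq> K"
proof
  fix x assume "x \<in> conj_class G H y"
  then obtain h where h: "h \<in> H" and x: "x = h \<otimes> y \<otimes> inv h" unfolding conj_class_def by blast
  have hK: "h \<in> K" using h HK by blast
  have "h \<otimes> y \<in> K" by (rule subgroup.m_closed[OF K hK y])
  moreover have "inv h \<in> K" by (rule subgroup.m_inv_closed[OF K hK])
  ultimately show "x \<in> K" using x subgroup.m_closed[OF K] by blast
qed

lemma (in group) sq_comm_false:
  assumes fin: "finite (carrier G)" and pr: "Factorial_Ring.prime p"
    and y: "y \<in> carrier G" and z: "z \<in> carrier G"
    and dy: "p_decomp G p y ys yu" and dz: "p_decomp G p z zs zu"
    and n1: "ys \<otimes> zu \<noteq> zu \<otimes> ys" and n2: "zs \<otimes> yu \<noteq> yu \<otimes> zs"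
    and c: "(z \<otimes> z) \<otimes> y = y \<otimes> (z \<otimes> z)"
  shows False
proof -
  have sq: "w \<otimes> y = y \<otimes> w" if wz: "w = z [^] (m::nat)" and od: "odd (ord w)" for w m
  proof -
    have w: "w \<in> carrier G" using wz z by simp
    have "w \<otimes> w = z [^] (m + m)" using wz z by (simp add: nat_pow_mult)
    also have "\<dots> = (z [^] (2::nat)) [^] m" using z by (simp add: nat_pow_pow mult_2)
    also have "z [^] (2::nat) = z \<otimes> z" using z by (simp add: numeral_2_eq_2)
    finally have ww: "w \<otimes> w = (z \<otimes> z) [^] m" .
    have "(w \<otimes> w) \<otimes> y = y \<otimes> (w \<otimes> w)"
      unfolding ww using group_commutes_pow[OF c _ y, of m] z by simp
    then show ?thesis using odd_root_comm[OF fin w y od] by simp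
  qed
  from dy have ys: "ys \<in> carrier G" and yu: "yu \<in> carrier G" unfolding p_decomp_def by auto
  from dz have zs: "zs \<in> carrier G" and zu: "zu \<in> carrier G"
    and cs: "coprime (ord zs) p" and k: "\<exists>k. ord zu = p ^ k" unfolding p_decomp_def by auto
  obtain a1 where a1: "ys = y [^] (a1::nat)" using pdecomp_pows(1)[OF fin dy] by blast
  obtain a2 where a2: "yu = y [^] (a2::nat)" using pdecomp_pows(2)[OF fin dy] by blast
  obtain b1 where b1: "zs = z [^] (b1::nat)" using pdecomp_pows(1)[OF fin dz] by blast
  obtain b2 where b2: "zu = z [^] (b2::nat)" using pdecomp_pows(2)[OF fin dz] by blast
  show False
  proof (cases "p = 2")
    case True
    have "odd (ord zs)" using cs True by simp
    then have "zs \<otimes> y = y \<otimes> zs" using sq b1 by blast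
    then have "y [^] a2 \<otimes> zs = zs \<otimes> y [^] a2" using group_commutes_pow[of y zs a2] y zs by simp
    then show False using n2 a2 by simp
  next
    case False
    then have "odd p" using pr prime_ge_2_nat[OF pr] prime_odd_nat[OF pr] by simp
    then have "odd (ord zu)" using k by auto
    then have "zu \<otimes> y = y \<otimes> zu" using sq b2 by blast
    then have "y [^] a1 \<otimes> zu = zu \<otimes> y [^] a1" using group_commutes_pow[of y zu a1] y zu by simp
    then show False using n1 a1 by simp
  qed
qed

lemma (in group) main_aux:
  assumes "finite (carrier G)" and "Factorial_Ring.prime p"
    and "y \<in> carrier G" and "z \<in> carrier G"
    and "p_decomp G p y ys yu" and "p_decomp G p z zs zu"
    and "ys \<otimes> zu \<noteq> zu \<otimes> ys"
    and "zs \<otimes> yu \<noteq> yu \<otimes> zs"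
  shows "y \<otimes> z \<noteq> z \<otimes> y
    \<and> card (conj_class G (generate G {y, z}) y) \<ge> 3
    \<and> card (conj_class G (generate G {y, z}) z) \<ge> 3
    \<and> ((z \<in> conj_class G (carrier G) y
         \<and> conj_class G (generate G {y, z}) y \<inter> conj_class G (generate G {y, z}) z = {})
        \<longrightarrow> type_C G (conj_class G (carrier G) y))"
proof -
  note fin = assms(1) and pr = assms(2) and y = assms(3) and z = assms(4)
    and dy = assms(5) and dz = assms(6) and n1 = assms(7) and n2 = assms(8)
  define H where "H = generate G {y, z}"
  have HS: "subgroup H G" unfolding H_def using y z by (intro generate_is_subgroup) auto
  have yH: "y \<in> H" unfolding H_def by (rule generate.incl) simp
  have zH: "z \<in> H" unfolding H_def by (rule generate.incl) simp
  obtain a1 where a1: "ys = y [^] (a1::nat)" using pdecomp_pows(1)[OF fin dy] by blast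
  obtain b2 where b2: "zu = z [^] (b2::nat)" using pdecomp_pows(2)[OF fin dz] by blast
  have nc: "y \<otimes> z \<noteq> z \<otimes> y"
  proof
    assume "y \<otimes> z = z \<otimes> y"
    then have "y [^] a1 \<otimes> z [^] b2 = z [^] b2 \<otimes> y [^] a1" using comm_pows y z by blast
    then show False using n1 a1 b2 by simp
  qed
  have c1: "(z \<otimes> z) \<otimes> y \<noteq> y \<otimes> (z \<otimes> z)"
    using sq_comm_false[OF fin pr y z dy dz n1 n2] by blast
  have c2: "(y \<otimes> y) \<otimes> z \<noteq> z \<otimes> (y \<otimes> y)"
    using sq_comm_false[OF fin pr z y dz dy n2 n1] by metis
  have k1: "card (conj_class G H y) \<ge> 3"
    using conj_class_card3[OF fin y z HS zH] nc c1 by metis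
  have k2: "card (conj_class G H z) \<ge> 3"
    using conj_class_card3[OF fin z y HS yH] nc c1 c2 by metis
  have tc: "type_C G (conj_class G (carrier G) y)"
    if zc: "z \<in> conj_class G (carrier G) y" and dj: "conj_class G H y \<inter> conj_class G H z = {}"
  proof -
    have yc: "y \<in> conj_class G (carrier G) y" by (rule conj_mem_self[OF subgroup_self y])
    have yy: "y \<in> conj_class G H y" by (rule conj_mem_self[OF HS y])
    have zz: "z \<in> conj_class G H z" by (rule conj_mem_self[OF HS z])
    have ne: "conj_class G H y \<noteq> conj_class G H z" using yy dj by blast
    have s1: "conj_class G H y \<subseteq> H" by (rule conj_class_sub[OF HS subset_refl yH])
    have s2: "conj_class G H z \<subseteq> H" by (rule conj_class_sub[OF HS subset_refl zH])
    have g1: "generate G (conj_class G H y \<union> conj_class G H z) \<subseteq> H"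
      using generate_subgroup_incl[OF _ HS] s1 s2 by blast
    have g2: "H \<subseteq> generate G (conj_class G H y \<union> conj_class G H z)"
    proof -
      have "generate G {y, z} \<subseteq> generate G (conj_class G H y \<union> conj_class G H z)"
        using yy zz by (intro mono_generate) blast
      then show ?thesis by (simp add: H_def)
    qed
    have eqH: "H = generate G (conj_class G H y \<union> conj_class G H z)" using g1 g2 by blast
    have mn: "min (card (conj_class G H y)) (card (conj_class G H z)) > 2" using k1 k2 by simp
    show ?thesis unfolding type_C_def
      by (rule exI[of _ H], rule exI[of _ y], rule exI[of _ z])
         (use HS yc zc yH zH nc ne eqH mn in blast)
  qed
  show ?thesis using nc k1 k2 tc unfolding H_def by blast
qed


theorem lemma2p5:
  fixes M :: "('a, 'b) monoid_scheme" and p :: nat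
  assumes "group M" and "finite (carrier M)" and "Factorial_Ring.prime p" and "p dvd order M"
    and "y \<in> carrier M" and "z \<in> carrier M"
    and "p_decomp M p y ys yu" and "p_decomp M p z zs zu"
    and "ys \<otimes>\<^bsub>M\<^esub> zu \<noteq> zu \<otimes>\<^bsub>M\<^esub> ys"
    and "zs \<otimes>\<^bsub>M\<^esub> yu \<noteq> yu \<otimes>\<^bsub>M\<^esub> zs"
  shows "y \<otimes>\<^bsub>M\<^esub> z \<noteq> z \<otimes>\<^bsub>M\<^esub> y
    \<and> card (conj_class M (generate M {y, z}) y) \<ge> 3
    \<and> card (conj_class M (generate M {y, z}) z) \<ge> 3
    \<and> ((z \<in> conj_class M (carrier M) y
         \<and> conj_class M (generate M {y, z}) y \<inter> conj_class M (generate M {y, z}) z = {})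
        \<longrightarrow> type_C M (conj_class M (carrier M) y))"
  using group.main_aux[OF assms(1,2,3,5,6,7,8,9,10)] .

end
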